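(* Let $i\geq1$ and let $\varphi_i\colon(A/\!/E(i))_*\to(A/\!/E(i-1))_*$ be the algebra map determined by $\zeta_k\mapsto\zeta_{k-1}$ for all $k\ge1$ (with $\zeta_0=1$) and $\overline{\tau}_j\mapsto\overline{\tau}_{j-1}$ for all $j\geq i+1$. Then $\varphi_i$ is a map of ungraded $E(i)_*$-comodules, where $(A/\!/E(i-1))_*$ is regarded as an $E(i)_*$-comodule.
   Context: Let $p$ be an odd prime. In the mod $p$ dual Steenrod algebra $A_*$ let $\zeta_n,\overline{\tau}_n$ be the conjugates of Milnor's generators $\xi_n,\tau_n$. For $n\ge0$, $(A/\!/E(n))_*=\mathbb{F}_p[\zeta_1,\zeta_2,\ldots]\otimes E(\overline{\tau}_{n+1},\overline{\tau}_{n+2},\ldots)\subseteq A_*$ is an $A_*$-comodule algebra via the coproduct $\psi(\zeta_n)=\sum_{a+b=n}\zeta_b\otimes\zeta_a^{p^b}$, $\psi(\overline{\tau}_n)=1\otimes\overline{\tau}_n+\sum_{a+b=n}\overline{\tau}_b\otimes\zeta_a^{p^b}$, and hence a comodule over the quotient Hopf algebra $E(i)_*=E(\overline{\tau}_0,\ldots,\overline{\tau}_i)$ (primitive generators) for any $i$, via the projection $A_*\to E(i)_*$ killing $\zeta_k$ ($k\ge1$) and $\overline{\tau}_k$ ($k>i$). *)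

theory Defs
  imports Main "HOL-Computational_Algebra.Primes" "HOL-Library.Poly_Mapping" "HOL-Library.Product_Lexorder"
begin

text \<open>A monomial is a pair (e, T): e gives the exponents of the even (polynomial)
generators, T is the set of odd (exterior) generators present, written in
increasing order.\<close>

type_synonym ('e,'o) mono = "('e \<Rightarrow>\<^sub>0 nat) \<times> 'o set"
type_synonym ('e,'o,'k) sp = "('e,'o) mono \<Rightarrow>\<^sub>0 'k"

definition inv_count :: "'o::linorder set \<Rightarrow> 'o set \<Rightarrow> nat" where
  "inv_count T1 T2 = card {(a,b). a \<in> T1 \<and> b \<in> T2 \<and> b < a}"

text \<open>c times the product of two monomials (Koszul sign for reordering odd generators).\<close>
definition mono_term :: "'k::comm_ring_1 \<Rightarrow> ('e,'o::linorder) mono \<Rightarrow> ('e,'o) mono \<Rightarrow> ('e,'o,'k) sp" where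
  "mono_term c m n =
     (if snd m \<inter> snd n = {}
      then Poly_Mapping.single (fst m + fst n, snd m \<union> snd n) (c * (-1) ^ inv_count (snd m) (snd n))
      else 0)"

definition sp_mult :: "('e,'o::linorder,'k::comm_ring_1) sp \<Rightarrow> ('e,'o,'k) sp \<Rightarrow> ('e,'o,'k) sp" where
  "sp_mult f g = (\<Sum>m\<in>Poly_Mapping.keys f. \<Sum>n\<in>Poly_Mapping.keys g. mono_term (Poly_Mapping.lookup f m * Poly_Mapping.lookup g n) m n)"

definition sp_const :: "'k::comm_ring_1 \<Rightarrow> ('e,'o,'k) sp" where
  "sp_const c = Poly_Mapping.single (0, {}) c"

abbreviation sp_one :: "('e,'o,'k::comm_ring_1) sp" where
  "sp_one \<equiv> sp_const 1"

definition sp_smult :: "'k::comm_ring_1 \<Rightarrow> ('e,'o::linorder,'k) sp \<Rightarrow> ('e,'o,'k) sp" where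
  "sp_smult c x = sp_mult (sp_const c) x"

definition sp_pow :: "('e,'o::linorder,'k::comm_ring_1) sp \<Rightarrow> nat \<Rightarrow> ('e,'o,'k) sp" where
  "sp_pow x n = ((sp_mult x) ^^ n) sp_one"

definition sp_even :: "'e \<Rightarrow> ('e,'o,'k::comm_ring_1) sp" where
  "sp_even k = Poly_Mapping.single (Poly_Mapping.single k 1, {}) 1"

definition sp_odd :: "'o \<Rightarrow> ('e,'o,'k::comm_ring_1) sp" where
  "sp_odd j = Poly_Mapping.single (0, {j}) 1"

definition mono_image ::
  "('e::linorder \<Rightarrow> ('e2,'o2::linorder,'k::comm_ring_1) sp) \<Rightarrow> ('o::linorder \<Rightarrow> ('e2,'o2,'k) sp)
   \<Rightarrow> ('e,'o) mono \<Rightarrow> ('e2,'o2,'k) sp" where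
  "mono_image ge go m =
     sp_mult
       (foldr (\<lambda>k acc. sp_mult (sp_pow (ge k) (Poly_Mapping.lookup (fst m) k)) acc)
              (sorted_list_of_set (Poly_Mapping.keys (fst m))) sp_one)
       (foldr (\<lambda>j acc. sp_mult (go j) acc) (sorted_list_of_set (snd m)) sp_one)"

definition hom_ext ::
  "('e::linorder \<Rightarrow> ('e2,'o2::linorder,'k::comm_ring_1) sp) \<Rightarrow> ('o::linorder \<Rightarrow> ('e2,'o2,'k) sp)
   \<Rightarrow> ('e,'o,'k) sp \<Rightarrow> ('e2,'o2,'k) sp" where
  "hom_ext ge go f = (\<Sum>m\<in>Poly_Mapping.keys f. sp_smult (Poly_Mapping.lookup f m) (mono_image ge go m))"

text \<open>A_* (as an algebra): even generators zeta_k (k \<ge> 1), odd generators taubar_j (j \<ge> 0).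
Type: even and odd generators indexed by nat.\<close>
type_synonym 'k Astar = "(nat, nat, 'k) sp"

text \<open>A_* \<otimes> A_*: the graded tensor product of free graded-commutative algebras is the
free graded-commutative algebra on the disjoint union of generators; index (False,k)
is the generator in the left factor, (True,k) in the right factor. Since
(False,_) < (True,_), a basis monomial x \<otimes> y is encoded as the product x\<cdot>y, which
gives the Koszul sign convention (x\<otimes>y)(x'\<otimes>y') = (-1)^{|y||x'|} xx'\<otimes>yy'.\<close>
type_synonym 'k Atens = "(bool \<times> nat, bool \<times> nat, 'k) sp"

definition zeta :: "nat \<Rightarrow> 'k::comm_ring_1 Astar" where
  "zeta k = (if k = 0 then sp_one else sp_even k)"

definition taubar :: "nat \<Rightarrow> 'k::comm_ring_1 Astar" where
  "taubar j = sp_odd j"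

definition zetaL :: "nat \<Rightarrow> 'k::comm_ring_1 Atens" where
  "zetaL k = (if k = 0 then sp_one else sp_even (False, k))"
definition zetaR :: "nat \<Rightarrow> 'k::comm_ring_1 Atens" where
  "zetaR k = (if k = 0 then sp_one else sp_even (True, k))"
definition taubarL :: "nat \<Rightarrow> 'k::comm_ring_1 Atens" where
  "taubarL j = sp_odd (False, j)"
definition taubarR :: "nat \<Rightarrow> 'k::comm_ring_1 Atens" where
  "taubarR j = sp_odd (True, j)"

text \<open>(A//E(n))_* = F_p[zeta_1,zeta_2,...] \<otimes> E(taubar_{n+1},...) as a subset of A_*.\<close>
definition AmodE :: "nat \<Rightarrow> 'k::comm_ring_1 Astar \<Rightarrow> bool" where
  "AmodE n f \<longleftrightarrow> (\<forall>m\<in>Poly_Mapping.keys f. 0 \<notin> Poly_Mapping.keys (fst m) \<and> finite (snd m) \<and> snd m \<subseteq> {n+1..})"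

definition psi :: "nat \<Rightarrow> 'k::comm_ring_1 Astar \<Rightarrow> 'k Atens" where
  "psi p = hom_ext
     (\<lambda>n. \<Sum>b\<le>n. sp_mult (zetaL b) (sp_pow (zetaR (n - b)) (p ^ b)))
     (\<lambda>n. taubarR n + (\<Sum>b\<le>n. sp_mult (taubarL b) (sp_pow (zetaR (n - b)) (p ^ b))))"

text \<open>Projection A_* \<otimes> A_* \<rightarrow> E(i)_* \<otimes> A_* (on the left factor, kill zeta_k, k \<ge> 1,
and taubar_k, k > i); the image is the subalgebra E(i)_* \<otimes> A_*.\<close>
definition projE :: "nat \<Rightarrow> 'k::comm_ring_1 Atens \<Rightarrow> 'k Atens" where
  "projE i = hom_ext
     (\<lambda>(s,k). if s then zetaR k else (if k = 0 then sp_one else 0))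
     (\<lambda>(s,j). if s then taubarR j else (if j \<le> i then taubarL j else 0))"

definition coact :: "nat \<Rightarrow> nat \<Rightarrow> 'k::comm_ring_1 Astar \<Rightarrow> 'k Atens" where
  "coact p i f = projE i (psi p f)"

definition embR :: "'k::comm_ring_1 Astar \<Rightarrow> 'k Atens" where
  "embR = hom_ext zetaR taubarR"

definition id_tensor :: "('k::comm_ring_1 Astar \<Rightarrow> 'k Astar) \<Rightarrow> 'k Atens \<Rightarrow> 'k Atens" where
  "id_tensor F = hom_ext
     (\<lambda>(s,k). if s then embR (F (zeta k)) else zetaL k)
     (\<lambda>(s,j). if s then embR (F (taubar j)) else taubarL j)"

definition phi :: "nat \<Rightarrow> 'k::comm_ring_1 Astar \<Rightarrow> 'k Astar" where
  "phi i = hom_ext (\<lambda>k. zeta (k - 1)) (\<lambda>j. taubar (j - 1))"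

end

theory Submission imports Defs begin

abbreviation "lk \<equiv> Poly_Mapping.lookup"
abbreviation "ks \<equiv> Poly_Mapping.keys"
abbreviation "sg \<equiv> Poly_Mapping.single"

lemma sp_expand: "(x::('a \<Rightarrow>\<^sub>0 'b::comm_monoid_add)) = (\<Sum>m\<in>ks x. sg m (lk x m))"
  by (rule poly_mapping_eqI) (simp add: lookup_sum lookup_single when_def in_keys_iff)

lemma lookup_mono_term: "lk (mono_term a m n) q = a * lk (mono_term 1 m n) q"
  by (simp add: mono_term_def lookup_single when_def)

lemma mono_term_0[simp]: "mono_term 0 m n = 0"
  by (simp add: mono_term_def)

lemma keys_mono_term:
  "ks (mono_term a m n) \<subseteq> {(fst m + fst n, snd m \<union> snd n)}"
  "q \<in> ks (mono_term a m n) \<Longrightarrow> snd m \<inter> snd n = {}"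
  by (auto simp: mono_term_def split: if_splits)

lemma sp_mult_expand:
  assumes "finite A" "finite B" "ks x \<subseteq> A" "ks y \<subseteq> B"
  shows "sp_mult x y = (\<Sum>m\<in>A. \<Sum>n\<in>B. mono_term (lk x m * lk y n) m n)"
proof -
  have "(\<Sum>m\<in>ks x. \<Sum>n\<in>B. mono_term (lk x m * lk y n) m n)
      = (\<Sum>m\<in>A. \<Sum>n\<in>B. mono_term (lk x m * lk y n) m n)"
    by (rule sum.mono_neutral_left) (use assms in \<open>auto simp: in_keys_iff\<close>)
  moreover have "(\<Sum>n\<in>ks y. mono_term (lk x m * lk y n) m n)
      = (\<Sum>n\<in>B. mono_term (lk x m * lk y n) m n)" for m
    by (rule sum.mono_neutral_left) (use assms in \<open>auto simp: in_keys_iff\<close>)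
  ultimately show ?thesis unfolding sp_mult_def by simp
qed

lemma lookup_sp_mult:
  assumes "finite A" "finite B" "ks x \<subseteq> A" "ks y \<subseteq> B"
  shows "lk (sp_mult x y) q = (\<Sum>m\<in>A. \<Sum>n\<in>B. lk x m * lk y n * lk (mono_term 1 m n) q)"
  by (simp add: sp_mult_expand[OF assms] lookup_sum lookup_mono_term[of "_ * _"])

lemma sp_mult_add_left: "sp_mult (x + x') y = sp_mult x y + sp_mult x' y"
proof (rule poly_mapping_eqI)
  fix q
  let ?A = "ks x \<union> ks x'"
  have A: "ks (x + x') \<subseteq> ?A" by (rule keys_add)
  show "lk (sp_mult (x + x') y) q = lk (sp_mult x y + sp_mult x' y) q"
    by (simp add: lookup_add lookup_sp_mult[OF _ _ A order_refl]
        lookup_sp_mult[of ?A "ks y" x y] lookup_sp_mult[of ?A "ks y" x' y]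
        distrib_right sum.distrib)
qed

lemma sp_mult_add_right: "sp_mult y (x + x') = sp_mult y x + sp_mult y x'"
proof (rule poly_mapping_eqI)
  fix q
  let ?A = "ks x \<union> ks x'"
  have A: "ks (x + x') \<subseteq> ?A" by (rule keys_add)
  show "lk (sp_mult y (x + x')) q = lk (sp_mult y x + sp_mult y x') q"
    by (simp add: lookup_add lookup_sp_mult[OF _ _ order_refl A]
        lookup_sp_mult[of "ks y" ?A y x] lookup_sp_mult[of "ks y" ?A y x']
        distrib_right distrib_left sum.distrib)
qed

lemma sp_mult_zero[simp]: "sp_mult 0 y = 0" "sp_mult y 0 = 0"
  by (simp_all add: sp_mult_def)

lemma sp_mult_sum_left: "sp_mult (\<Sum>i\<in>I. f i) y = (\<Sum>i\<in>I. sp_mult (f i) y)"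
  by (induction I rule: infinite_finite_induct) (simp_all add: sp_mult_add_left)

lemma sp_mult_sum_right: "sp_mult y (\<Sum>i\<in>I. f i) = (\<Sum>i\<in>I. sp_mult y (f i))"
  by (induction I rule: infinite_finite_induct) (simp_all add: sp_mult_add_right)

lemma sp_mult_single: "sp_mult (sg m a) (sg n b) = mono_term (a * b) m n"
  by (subst sp_mult_expand[of "{m}" "{n}"]) auto

lemma mono_term_unit_left: "mono_term a (0,{}) n = sg n a"
  by (cases n) (simp add: mono_term_def inv_count_def)

lemma mono_term_unit_right: "mono_term a n (0,{}) = sg n a"
  by (cases n) (simp add: mono_term_def inv_count_def)

lemma sum_when_delta: "finite K \<Longrightarrow> (\<Sum>m\<in>K. (f m::'b::comm_ring_1) * (1 when m = q)) = (if q \<in> K then f q else 0)"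
proof -
  assume K: "finite K"
  have "\<And>m. f m * (1 when m = q) = (if m = q then f m else 0)" by (simp add: when_def)
  then show ?thesis using K by (simp add: sum.delta')
qed

lemma lookup_sp_smult[simp]: "lk (sp_smult c x) q = c * lk x q"
proof -
  have "lk (sp_smult c x) q = (\<Sum>m\<in>{(0,{})}. \<Sum>n\<in>ks x. lk (sg (0,{}) c) m * lk x n * lk (mono_term 1 m n) q)"
    unfolding sp_smult_def sp_const_def by (rule lookup_sp_mult) auto
  also have "\<dots> = (\<Sum>n\<in>ks x. c * lk x n * (1 when n = q))"
    by (simp add: mono_term_unit_left lookup_single)
  also have "\<dots> = c * lk x q"
    by (subst sum_when_delta) (auto simp: in_keys_iff)
  finally show ?thesis .
qed

lemma sp_one_mult[simp]: "sp_mult sp_one x = x"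
proof -
  have "sp_mult sp_one x = sp_smult 1 x" by (simp add: sp_smult_def)
  also have "\<dots> = x" by (rule poly_mapping_eqI) simp
  finally show ?thesis .
qed

lemma sp_mult_one[simp]: "sp_mult x sp_one = x"
proof (rule poly_mapping_eqI)
  fix q
  have "lk (sp_mult x sp_one) q = (\<Sum>m\<in>ks x. \<Sum>n\<in>{(0,{})}. lk x m * lk (sg (0,{}) 1) n * lk (mono_term 1 m n) q)"
    unfolding sp_const_def by (rule lookup_sp_mult) auto
  also have "\<dots> = (\<Sum>m\<in>ks x. lk x m * (1 when m = q))"
    by (simp add: mono_term_unit_right lookup_single)
  also have "\<dots> = lk x q"
    by (subst sum_when_delta) (auto simp: in_keys_iff)
  finally show "lk (sp_mult x sp_one) q = lk x q" .
qed

lemma sp_smult_mult_left: "sp_mult (sp_smult c x) y = sp_smult c (sp_mult x y)"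
proof (rule poly_mapping_eqI)
  fix q
  have A: "ks (sp_smult c x) \<subseteq> ks x" by (auto simp: in_keys_iff)
  show "lk (sp_mult (sp_smult c x) y) q = lk (sp_smult c (sp_mult x y)) q"
    by (simp add: lookup_sp_mult[OF _ _ A order_refl] lookup_sp_mult[of "ks x" "ks y" x y]
        sum_distrib_left mult.assoc)
qed

lemma sp_smult_mult_right: "sp_mult y (sp_smult c x) = sp_smult c (sp_mult y x)"
proof (rule poly_mapping_eqI)
  fix q
  have A: "ks (sp_smult c x) \<subseteq> ks x" by (auto simp: in_keys_iff)
  show "lk (sp_mult y (sp_smult c x)) q = lk (sp_smult c (sp_mult y x)) q"
    by (simp add: lookup_sp_mult[OF _ _ order_refl A] lookup_sp_mult[of "ks y" "ks x" y x]
        sum_distrib_left mult.assoc mult.left_commute)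
qed

lemma sp_smult_smult[simp]: "sp_smult c (sp_smult d x) = sp_smult (c * d) x"
  by (rule poly_mapping_eqI) (simp add: mult.assoc)

lemma sp_smult_1[simp]: "sp_smult 1 x = x"
  by (rule poly_mapping_eqI) simp

lemma sp_smult_0[simp]: "sp_smult 0 x = 0" "sp_smult c 0 = 0"
  by (rule poly_mapping_eqI, simp)+

lemma sp_smult_add: "sp_smult c (x + y) = sp_smult c x + sp_smult c y"
  by (rule poly_mapping_eqI) (simp add: lookup_add distrib_left)

lemma sp_smult_sum: "sp_smult c (\<Sum>i\<in>I. f i) = (\<Sum>i\<in>I. sp_smult c (f i))"
  by (rule poly_mapping_eqI) (simp add: lookup_sum sum_distrib_left)

lemma sp_smult_single: "sp_smult c (sg m a) = sg m (c * a)"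
  by (rule poly_mapping_eqI) (simp add: lookup_single when_def)

lemma keys_sp_smult: "ks (sp_smult c x) \<subseteq> ks x"
  by (auto simp: in_keys_iff)

section \<open>Inversion counts\<close>

lemma inv_count_Un_left:
  fixes A B C :: "'o::linorder set"
  assumes "finite A" "finite B" "finite C" "A \<inter> B = {}"
  shows "inv_count (A \<union> B) C = inv_count A C + inv_count B C"
proof -
  have e: "{(a,b). a \<in> A \<union> B \<and> b \<in> C \<and> b < a} = {(a,b). a \<in> A \<and> b \<in> C \<and> b < a} \<union> {(a,b). a \<in> B \<and> b \<in> C \<and> b < a}"
    by auto
  have f1: "finite {(a,b). a \<in> A \<and> b \<in> C \<and> b < a}"
    by (rule finite_subset[of _ "A \<times> C"]) (use assms in auto)
  have f2: "finite {(a,b). a \<in> B \<and> b \<in> C \<and> b < a}"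
    by (rule finite_subset[of _ "B \<times> C"]) (use assms in auto)
  show ?thesis unfolding inv_count_def e
    by (rule card_Un_disjoint[OF f1 f2]) (use assms in auto)
qed

lemma inv_count_Un_right:
  fixes A B C :: "'o::linorder set"
  assumes "finite A" "finite B" "finite C" "B \<inter> C = {}"
  shows "inv_count A (B \<union> C) = inv_count A B + inv_count A C"
proof -
  have e: "{(a,b). a \<in> A \<and> b \<in> B \<union> C \<and> b < a} = {(a,b). a \<in> A \<and> b \<in> B \<and> b < a} \<union> {(a,b). a \<in> A \<and> b \<in> C \<and> b < a}"
    by auto
  have f1: "finite {(a,b). a \<in> A \<and> b \<in> B \<and> b < a}"
    by (rule finite_subset[of _ "A \<times> B"]) (use assms in auto)
  have f2: "finite {(a,b). a \<in> A \<and> b \<in> C \<and> b < a}"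
    by (rule finite_subset[of _ "A \<times> C"]) (use assms in auto)
  show ?thesis unfolding inv_count_def e
    by (rule card_Un_disjoint[OF f1 f2]) (use assms in auto)
qed

lemma inv_count_swap:
  fixes A B :: "'o::linorder set"
  assumes "finite A" "finite B" "A \<inter> B = {}"
  shows "inv_count A B + inv_count B A = card A * card B"
proof -
  have s: "inv_count B A = card {(a,b). a \<in> A \<and> b \<in> B \<and> a < b}"
  proof -
    have "{(a,b). a \<in> B \<and> b \<in> A \<and> b < a} = prod.swap ` {(a,b). a \<in> A \<and> b \<in> B \<and> a < b}"
      by auto
    then show ?thesis unfolding inv_count_def by (simp add: card_image)
  qed
  have e: "A \<times> B = {(a,b). a \<in> A \<and> b \<in> B \<and> b < a} \<union> {(a,b). a \<in> A \<and> b \<in> B \<and> a < b}"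
    using assms(3) by (auto simp: neq_iff)
  have f1: "finite {(a,b). a \<in> A \<and> b \<in> B \<and> b < a}"
    by (rule finite_subset[of _ "A \<times> B"]) (use assms in auto)
  have f2: "finite {(a,b). a \<in> A \<and> b \<in> B \<and> a < b}"
    by (rule finite_subset[of _ "A \<times> B"]) (use assms in auto)
  have "card (A \<times> B) = inv_count A B + inv_count B A"
    unfolding s e inv_count_def[of A B] by (rule card_Un_disjoint[OF f1 f2]) auto
  then show ?thesis by (simp add: card_cartesian_product)
qed

lemma inv_count_empty[simp]: "inv_count {} B = 0" "inv_count A {} = 0"
  by (simp_all add: inv_count_def)

lemma inv_count_single:
  "inv_count {a} B = card {b\<in>B. b < a}"
proof -
  have "{(x,b). x \<in> {a} \<and> b \<in> B \<and> b < x} = (\<lambda>b. (a,b)) ` {b\<in>B. b < a}" by auto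
  then show ?thesis unfolding inv_count_def by (simp add: card_image inj_on_def)
qed

lemma mono_term_mult_single:
  assumes "finite (snd m)" "finite (snd n)" "finite (snd l)"
  shows "sp_mult (mono_term a m n) (sg l c) =
    (if snd m \<inter> snd n = {} \<and> snd m \<inter> snd l = {} \<and> snd n \<inter> snd l = {}
     then sg (fst m + fst n + fst l, snd m \<union> snd n \<union> snd l)
       (a * c * (-1) ^ (inv_count (snd m) (snd n) + inv_count (snd m) (snd l) + inv_count (snd n) (snd l)))
     else 0)"
proof (cases "snd m \<inter> snd n = {}")
  case True
  show ?thesis
    using True assms
    by (auto simp: mono_term_def sp_mult_single inv_count_Un_left power_add mult_ac)
next
  case False
  then show ?thesis by (simp add: mono_term_def)
qed


lemma single_mult_mono_term:
  assumes "finite (snd m)" "finite (snd n)" "finite (snd l)"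
  shows "sp_mult (sg m a) (mono_term c n l) =
    (if snd m \<inter> snd n = {} \<and> snd m \<inter> snd l = {} \<and> snd n \<inter> snd l = {}
     then sg (fst m + fst n + fst l, snd m \<union> snd n \<union> snd l)
       (a * c * (-1) ^ (inv_count (snd m) (snd n) + inv_count (snd m) (snd l) + inv_count (snd n) (snd l)))
     else 0)" (is "_ = ?R")
proof (cases "snd n \<inter> snd l = {}")
  case True
  have "sp_mult (sg m a) (mono_term c n l) = mono_term (a * (c * (-1) ^ inv_count (snd n) (snd l))) m (fst n + fst l, snd n \<union> snd l)"
    using True by (simp add: mono_term_def sp_mult_single)
  also have "\<dots> = ?R"
  proof (cases "snd m \<inter> (snd n \<union> snd l) = {}")
    case True2: True
    have i: "inv_count (snd m) (snd n \<union> snd l) = inv_count (snd m) (snd n) + inv_count (snd m) (snd l)"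
      using assms True by (simp add: inv_count_Un_right)
    have d: "snd m \<inter> snd n = {}" "snd m \<inter> snd l = {}" using True2 by auto
    have co: "a * (c * (-1) ^ inv_count (snd n) (snd l)) * (-1) ^ inv_count (snd m) (snd n \<union> snd l)
       = a * c * (-1) ^ (inv_count (snd m) (snd n) + inv_count (snd m) (snd l) + inv_count (snd n) (snd l))"
      unfolding i by (simp only: power_add mult_ac)
    have "mono_term (a * (c * (-1) ^ inv_count (snd n) (snd l))) m (fst n + fst l, snd n \<union> snd l)
      = sg (fst m + (fst n + fst l), snd m \<union> (snd n \<union> snd l)) (a * (c * (-1) ^ inv_count (snd n) (snd l)) * (-1) ^ inv_count (snd m) (snd n \<union> snd l))"
      using True2 by (simp add: mono_term_def)
    also have "\<dots> = ?R" using d True unfolding co by (simp add: add.assoc Un_assoc)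
    finally show ?thesis .
  next
    case False
    then show ?thesis by (auto simp: mono_term_def)
  qed
  finally show ?thesis .
next
  case False
  then show ?thesis by (simp add: mono_term_def)
qed

lemma single_assoc:
  assumes "finite (snd m)" "finite (snd n)" "finite (snd l)"
  shows "sp_mult (sp_mult (sg m a) (sg n b)) (sg l c) = sp_mult (sg m a) (sp_mult (sg n b) (sg l c))"
  by (simp add: sp_mult_single mono_term_mult_single single_mult_mono_term assms mult_ac)

lemma mono_term_swap:
  assumes "finite (snd m)" "finite (snd n)"
  shows "mono_term (a::'k::comm_ring_1) n m = mono_term (a * (-1) ^ (card (snd m) * card (snd n))) m n"
proof (cases "snd m \<inter> snd n = {}")
  case True
  have "(-1::'k) ^ inv_count (snd n) (snd m) = (-1) ^ (card (snd m) * card (snd n)) * (-1) ^ inv_count (snd m) (snd n)"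
  proof -
    have "(-1::'k) ^ (card (snd m) * card (snd n)) * (-1) ^ inv_count (snd m) (snd n)
       = (-1) ^ (inv_count (snd m) (snd n) + inv_count (snd n) (snd m)) * (-1) ^ inv_count (snd m) (snd n)"
      using inv_count_swap[OF assms True] by simp
    also have "\<dots> = (-1) ^ (2 * inv_count (snd m) (snd n)) * (-1) ^ inv_count (snd n) (snd m)"
      by (simp add: power_add mult_ac)
    also have "\<dots> = (-1) ^ inv_count (snd n) (snd m)"
      by (simp add: power_mult)
    finally show ?thesis by simp
  qed
  moreover have "snd n \<inter> snd m = {}" using True by auto
  ultimately show ?thesis using True
    unfolding mono_term_def
    by (simp only: if_True add.commute[of "fst n"] Un_commute[of "snd n"] mult.assoc)
next
  case False
  then show ?thesis by (auto simp: mono_term_def Int_commute)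
qed

definition allk :: "(('e,'o) mono \<Rightarrow> bool) \<Rightarrow> ('e,'o,'k::zero) sp \<Rightarrow> bool" where
  "allk R x \<longleftrightarrow> (\<forall>m\<in>ks x. R m)"

definition finsp :: "('e,'o,'k::zero) sp \<Rightarrow> bool" where
  "finsp x \<longleftrightarrow> allk (\<lambda>m. finite (snd m)) x"

definition parsp :: "bool \<Rightarrow> ('e,'o,'k::zero) sp \<Rightarrow> bool" where
  "parsp b x \<longleftrightarrow> allk (\<lambda>m. finite (snd m) \<and> odd (card (snd m)) = b) x"

lemma allk_zero[simp]: "allk R 0"
  by (simp add: allk_def)

lemma allk_add: "allk R x \<Longrightarrow> allk R y \<Longrightarrow> allk R (x + y)"
  using keys_add[of x y] by (auto simp: allk_def)

lemma allk_sum: "(\<And>i. i \<in> I \<Longrightarrow> allk R (f i)) \<Longrightarrow> allk R (\<Sum>i\<in>I. f i)"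
  by (induction I rule: infinite_finite_induct) (auto intro: allk_add)

lemma allk_smult: "allk R x \<Longrightarrow> allk R (sp_smult c x)"
  using keys_sp_smult by (auto simp: allk_def)

lemma allk_uminus: "allk R x \<Longrightarrow> allk R (- x)"
  unfolding allk_def keys_minus .

lemma allk_single: "R m \<Longrightarrow> allk R (sg m c)"
  unfolding allk_def by simp

lemma keys_sp_mult:
  assumes "q \<in> ks (sp_mult x y)"
  shows "\<exists>m\<in>ks x. \<exists>n\<in>ks y. snd m \<inter> snd n = {} \<and> q = (fst m + fst n, snd m \<union> snd n)"
proof -
  have "q \<in> (\<Union>m\<in>ks x. ks (\<Sum>n\<in>ks y. mono_term (lk x m * lk y n) m n))"
    using assms unfolding sp_mult_def by (rule subsetD[OF keys_sum])
  then obtain m where m: "m \<in> ks x" "q \<in> ks (\<Sum>n\<in>ks y. mono_term (lk x m * lk y n) m n)"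
    by blast
  have "q \<in> (\<Union>n\<in>ks y. ks (mono_term (lk x m * lk y n) m n))"
    using m(2) by (rule subsetD[OF keys_sum])
  then obtain n where n: "n \<in> ks y" "q \<in> ks (mono_term (lk x m * lk y n) m n)"
    by blast
  have d: "snd m \<inter> snd n = {}" by (rule keys_mono_term(2)[OF n(2)])
  have e: "q = (fst m + fst n, snd m \<union> snd n)"
    using keys_mono_term(1)[of "lk x m * lk y n" m n] n(2) by blast
  show ?thesis
    using m(1) n(1) d e by blast
qed

lemma allk_mult:
  assumes "allk R1 x" "allk R2 y"
    "\<And>m n. R1 m \<Longrightarrow> R2 n \<Longrightarrow> snd m \<inter> snd n = {} \<Longrightarrow> R (fst m + fst n, snd m \<union> snd n)"
  shows "allk R (sp_mult x y)"
  unfolding allk_def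
proof
  fix q assume "q \<in> ks (sp_mult x y)"
  from keys_sp_mult[OF this] obtain m n where "m \<in> ks x" "n \<in> ks y" "snd m \<inter> snd n = {}"
    "q = (fst m + fst n, snd m \<union> snd n)" by blast
  then show "R q" using assms unfolding allk_def by blast
qed

lemma parsp_mult: "parsp a x \<Longrightarrow> parsp b y \<Longrightarrow> parsp (a \<noteq> b) (sp_mult x y)"
  unfolding parsp_def
  apply (erule allk_mult, assumption)
  apply (simp add: card_Un_disjoint)
  by blast

lemma finsp_mult: "finsp x \<Longrightarrow> finsp y \<Longrightarrow> finsp (sp_mult x y)"
  unfolding finsp_def by (erule allk_mult, assumption) auto

lemma parsp_finsp: "parsp b x \<Longrightarrow> finsp x"
  by (auto simp: allk_def parsp_def finsp_def)

lemma parsp_zero[simp]: "parsp b 0"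
  by (simp add: parsp_def)

lemma finsp_zero[simp]: "finsp 0"
  by (simp add: finsp_def)

lemma parsp_add: "parsp b x \<Longrightarrow> parsp b y \<Longrightarrow> parsp b (x + y)"
  unfolding parsp_def by (rule allk_add)

lemma finsp_add: "finsp x \<Longrightarrow> finsp y \<Longrightarrow> finsp (x + y)"
  unfolding finsp_def by (rule allk_add)

lemma parsp_sum: "(\<And>i. i \<in> I \<Longrightarrow> parsp b (f i)) \<Longrightarrow> parsp b (\<Sum>i\<in>I. f i)"
  unfolding parsp_def by (rule allk_sum)

lemma finsp_sum: "(\<And>i. i \<in> I \<Longrightarrow> finsp (f i)) \<Longrightarrow> finsp (\<Sum>i\<in>I. f i)"
  unfolding finsp_def by (rule allk_sum)

lemma parsp_smult: "parsp b x \<Longrightarrow> parsp b (sp_smult c x)"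
  unfolding parsp_def by (rule allk_smult)

lemma finsp_smult: "finsp x \<Longrightarrow> finsp (sp_smult c x)"
  unfolding finsp_def by (rule allk_smult)

lemma parsp_uminus: "parsp b x \<Longrightarrow> parsp b (- x)"
  unfolding parsp_def by (rule allk_uminus)

lemma finsp_uminus: "finsp x \<Longrightarrow> finsp (- x)"
  unfolding finsp_def by (rule allk_uminus)

lemma parsp_mult_FF: "parsp False x \<Longrightarrow> parsp False y \<Longrightarrow> parsp False (sp_mult x y)"
  using parsp_mult[of False x False y] by simp

lemma parsp_mult_TF: "parsp True x \<Longrightarrow> parsp False y \<Longrightarrow> parsp True (sp_mult x y)"
  using parsp_mult[of True x False y] by simp

lemma parsp_mult_FT: "parsp False x \<Longrightarrow> parsp True y \<Longrightarrow> parsp True (sp_mult x y)"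
  using parsp_mult[of False x True y] by simp

lemma allk_one: "R (0,{}) \<Longrightarrow> allk R sp_one"
  by (auto simp: allk_def sp_const_def)

section \<open>Associativity and graded commutativity\<close>

lemma sp_mult_sum_sum:
  "sp_mult (\<Sum>i\<in>I. f i) (\<Sum>j\<in>J. g j) = (\<Sum>i\<in>I. \<Sum>j\<in>J. sp_mult (f i) (g j))"
  by (subst sp_mult_sum_left) (simp only: sp_mult_sum_right)

lemma trilinear_left:
  "sp_mult (sp_mult (\<Sum>m\<in>A. X m) (\<Sum>n\<in>B. Y n)) (\<Sum>l\<in>C. Z l)
   = (\<Sum>m\<in>A. \<Sum>n\<in>B. \<Sum>l\<in>C. sp_mult (sp_mult (X m) (Y n)) (Z l))"
proof -
  have "sp_mult (sp_mult (\<Sum>m\<in>A. X m) (\<Sum>n\<in>B. Y n)) (\<Sum>l\<in>C. Z l)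
      = sp_mult (\<Sum>m\<in>A. \<Sum>n\<in>B. sp_mult (X m) (Y n)) (\<Sum>l\<in>C. Z l)"
    by (simp only: sp_mult_sum_sum)
  also have "\<dots> = (\<Sum>m\<in>A. \<Sum>n\<in>B. sp_mult (sp_mult (X m) (Y n)) (\<Sum>l\<in>C. Z l))"
    by (simp only: sp_mult_sum_left)
  also have "\<dots> = (\<Sum>m\<in>A. \<Sum>n\<in>B. \<Sum>l\<in>C. sp_mult (sp_mult (X m) (Y n)) (Z l))"
    by (simp only: sp_mult_sum_right)
  finally show ?thesis .
qed

lemma trilinear_right:
  "sp_mult (\<Sum>m\<in>A. X m) (sp_mult (\<Sum>n\<in>B. Y n) (\<Sum>l\<in>C. Z l))
   = (\<Sum>m\<in>A. \<Sum>n\<in>B. \<Sum>l\<in>C. sp_mult (X m) (sp_mult (Y n) (Z l)))"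
proof -
  have "sp_mult (\<Sum>m\<in>A. X m) (sp_mult (\<Sum>n\<in>B. Y n) (\<Sum>l\<in>C. Z l))
      = sp_mult (\<Sum>m\<in>A. X m) (\<Sum>n\<in>B. \<Sum>l\<in>C. sp_mult (Y n) (Z l))"
    by (simp only: sp_mult_sum_sum)
  also have "\<dots> = (\<Sum>m\<in>A. sp_mult (X m) (\<Sum>n\<in>B. \<Sum>l\<in>C. sp_mult (Y n) (Z l)))"
    by (rule sp_mult_sum_left)
  also have "\<dots> = (\<Sum>m\<in>A. \<Sum>n\<in>B. \<Sum>l\<in>C. sp_mult (X m) (sp_mult (Y n) (Z l)))"
    by (simp only: sp_mult_sum_right)
  finally show ?thesis .
qed

lemma sp_mult_assoc:
  assumes "finsp x" "finsp y" "finsp z"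
  shows "sp_mult (sp_mult x y) z = sp_mult x (sp_mult y z)"
proof -
  have ex: "x = (\<Sum>m\<in>ks x. sg m (lk x m))" by (rule sp_expand)
  have ey: "y = (\<Sum>m\<in>ks y. sg m (lk y m))" by (rule sp_expand)
  have ez: "z = (\<Sum>m\<in>ks z. sg m (lk z m))" by (rule sp_expand)
  have "sp_mult (sp_mult x y) z = (\<Sum>m\<in>ks x. \<Sum>n\<in>ks y. \<Sum>l\<in>ks z. sp_mult (sp_mult (sg m (lk x m)) (sg n (lk y n))) (sg l (lk z l)))"
    by (subst ex, subst ey, subst ez, rule trilinear_left)
  also have "\<dots> = (\<Sum>m\<in>ks x. \<Sum>n\<in>ks y. \<Sum>l\<in>ks z. sp_mult (sg m (lk x m)) (sp_mult (sg n (lk y n)) (sg l (lk z l))))"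
    using assms by (intro sum.cong refl single_assoc) (auto simp: allk_def finsp_def)
  also have "sp_mult x (sp_mult y z) = (\<Sum>m\<in>ks x. \<Sum>n\<in>ks y. \<Sum>l\<in>ks z. sp_mult (sg m (lk x m)) (sp_mult (sg n (lk y n)) (sg l (lk z l))))"
    by (subst ex, subst ey, subst ez, rule trilinear_right)
  finally show ?thesis by simp
qed

lemma sp_mult_comm_lookup:
  fixes x y :: "('e,'o::linorder,'k::comm_ring_1) sp"
  assumes "parsp a x" "parsp b y"
  shows "sp_mult y x = sp_smult (if a \<and> b then -1 else 1) (sp_mult x y)"
proof (rule poly_mapping_eqI)
  fix q
  have s: "lk (mono_term (1::'k) n m) q = (if a \<and> b then -1 else 1) * lk (mono_term 1 m n) q"
    if "m \<in> ks x" "n \<in> ks y" for m n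
  proof -
    have f: "finite (snd m)" "finite (snd n)" "odd (card (snd m)) = a" "odd (card (snd n)) = b"
      using assms that by (auto simp: allk_def parsp_def)
    have sgn: "(-1::'k) ^ (card (snd m) * card (snd n)) = (if a \<and> b then -1 else 1)"
      using f(3,4) by (auto simp: power_mult minus_one_power_iff)
    have "lk (mono_term (1::'k) n m) q = lk (mono_term ((-1)^(card (snd m) * card (snd n))) m n) q"
      using mono_term_swap[OF f(1,2), of "1::'k"] by simp
    also have "\<dots> = (-1)^(card (snd m) * card (snd n)) * lk (mono_term 1 m n) q"
      by (rule lookup_mono_term)
    also have "\<dots> = (if a \<and> b then -1 else 1) * lk (mono_term 1 m n) q"
      by (simp only: sgn)
    finally show ?thesis .
  qed
  have "lk (sp_mult y x) q = (\<Sum>n\<in>ks y. \<Sum>m\<in>ks x. lk y n * lk x m * lk (mono_term 1 n m) q)"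
    by (rule lookup_sp_mult) auto
  also have "\<dots> = (\<Sum>m\<in>ks x. \<Sum>n\<in>ks y. (if a \<and> b then -1 else 1) * (lk x m * lk y n * lk (mono_term 1 m n) q))"
    by (subst sum.swap) (intro sum.cong refl, simp add: s mult_ac)
  also have "\<dots> = (if a \<and> b then -1 else 1) * lk (sp_mult x y) q"
    by (simp add: lookup_sp_mult[of "ks x" "ks y" x y] sum_distrib_left)
  finally show "lk (sp_mult y x) q = lk (sp_smult (if a \<and> b then -1 else 1) (sp_mult x y)) q"
    by simp
qed

lemma sp_smult_m1: "sp_smult (-1) x = - x"
  by (rule poly_mapping_eqI) simp

lemma sp_mult_comm_even:
  assumes "parsp False x" "parsp b y"
  shows "sp_mult y x = sp_mult x y"
  using sp_mult_comm_lookup[OF assms] by simp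

lemma sp_mult_comm_even':
  assumes "parsp b y" "parsp False x"
  shows "sp_mult y x = sp_mult x y"
  using sp_mult_comm_lookup[OF assms] by simp

lemma sp_mult_anticomm:
  assumes "parsp True x" "parsp True y"
  shows "sp_mult y x = - sp_mult x y"
  using sp_mult_comm_lookup[OF assms] by (simp add: sp_smult_m1)

lemma odd_sq:
  assumes two: "\<forall>c::'k::comm_ring_1. c + c = 0 \<longrightarrow> c = 0" and x: "parsp True (x::('e,'o::linorder,'k) sp)"
  shows "sp_mult x x = 0"
proof (rule poly_mapping_eqI)
  fix q
  have "sp_mult x x = - sp_mult x x" by (rule sp_mult_anticomm[OF x x])
  then have "lk (sp_mult x x) q = - lk (sp_mult x x) q"
    by (metis lookup_uminus)
  then have "lk (sp_mult x x) q + lk (sp_mult x x) q = 0" by (simp add: eq_neg_iff_add_eq_0)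
  then show "lk (sp_mult x x) q = lk 0 q" using two by simp
qed



lemma parsp_one: "parsp False sp_one"
  unfolding parsp_def by (rule allk_one) simp

lemma finsp_one: "finsp sp_one"
  unfolding finsp_def by (rule allk_one) simp

lemma sp_pow_0[simp]: "sp_pow x 0 = sp_one"
  by (simp add: sp_pow_def)

lemma sp_pow_Suc: "sp_pow x (Suc n) = sp_mult x (sp_pow x n)"
  by (simp add: sp_pow_def)

lemma allk_pow:
  assumes "allk R x" "R (0,{})"
    "\<And>m n. R m \<Longrightarrow> R n \<Longrightarrow> snd m \<inter> snd n = {} \<Longrightarrow> R (fst m + fst n, snd m \<union> snd n)"
  shows "allk R (sp_pow x n)"
proof (induction n)
  case 0 then show ?case using assms(2) by (simp add: allk_one)
next
  case (Suc n) show ?case unfolding sp_pow_Suc by (rule allk_mult[where R=R, OF assms(1) Suc.IH assms(3)])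
qed

lemma parsp_pow: "parsp False x \<Longrightarrow> parsp False (sp_pow x n)"
  by (induction n) (simp_all add: parsp_one sp_pow_Suc parsp_mult_FF)

lemma finsp_pow: "finsp x \<Longrightarrow> finsp (sp_pow x n)"
  by (induction n) (simp_all add: finsp_one sp_pow_Suc finsp_mult)

section \<open>Even elements as a commutative monoid\<close>

typedef (overloaded) ('e,'o,'k) evsp = "{x :: ('e,'o::linorder,'k::comm_ring_1) sp. parsp False x}"
  morphisms Rep_ev Abs_ev
  by (rule exI[of _ 0]) (simp add: parsp_def)

lemma Rep_ev_par: "parsp False (Rep_ev a)"
  using Rep_ev[of a] by simp

lemma Rep_ev_Abs: "parsp False x \<Longrightarrow> Rep_ev (Abs_ev x) = x"
  by (rule Abs_ev_inverse) simp

instantiation evsp :: (type, linorder, comm_ring_1) comm_monoid_mult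
begin
definition one_evsp_def: "1 = Abs_ev sp_one"
definition times_evsp_def: "a * b = Abs_ev (sp_mult (Rep_ev a) (Rep_ev b))"
instance
proof
  fix a b c :: "('a,'b,'c) evsp"
  have RM: "Rep_ev (x * y) = sp_mult (Rep_ev x) (Rep_ev y)" for x y :: "('a,'b,'c) evsp"
    unfolding times_evsp_def
    by (rule Rep_ev_Abs) (rule parsp_mult_FF; rule Rep_ev_par)
  show "a * b * c = a * (b * c)"
    by (rule Rep_ev_inject[THEN iffD1])
       (simp add: RM sp_mult_assoc parsp_finsp[OF Rep_ev_par])
  show "a * b = b * a"
    by (rule Rep_ev_inject[THEN iffD1])
       (simp add: RM sp_mult_comm_even[OF Rep_ev_par Rep_ev_par])
  show "1 * a = a"
    by (rule Rep_ev_inject[THEN iffD1])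
       (simp add: RM one_evsp_def Rep_ev_Abs parsp_one)
qed
end

lemma Rep_ev_mult: "Rep_ev (a * b) = sp_mult (Rep_ev a) (Rep_ev b)"
  unfolding times_evsp_def
  by (rule Rep_ev_Abs) (rule parsp_mult_FF; rule Rep_ev_par)

lemma Rep_ev_one: "Rep_ev 1 = sp_one"
  by (simp add: one_evsp_def Rep_ev_Abs parsp_one)

lemma Rep_ev_pow: "parsp False x \<Longrightarrow> Rep_ev (Abs_ev x ^ n) = sp_pow x n"
  by (induction n) (simp_all add: Rep_ev_one Rep_ev_mult Rep_ev_Abs sp_pow_Suc)

definition EvI :: "('e::linorder \<Rightarrow> ('e2,'o2::linorder,'k::comm_ring_1) sp) \<Rightarrow> ('e \<Rightarrow>\<^sub>0 nat) \<Rightarrow> ('e2,'o2,'k) sp" where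
  "EvI ge e = foldr (\<lambda>k acc. sp_mult (sp_pow (ge k) (lk e k)) acc) (sorted_list_of_set (ks e)) sp_one"

definition OdI :: "('o::linorder \<Rightarrow> ('e2,'o2::linorder,'k::comm_ring_1) sp) \<Rightarrow> 'o set \<Rightarrow> ('e2,'o2,'k) sp" where
  "OdI go T = foldr (\<lambda>j acc. sp_mult (go j) acc) (sorted_list_of_set T) sp_one"

lemma mono_image_eq: "mono_image ge go m = sp_mult (EvI ge (fst m)) (OdI go (snd m))"
  by (simp add: mono_image_def EvI_def OdI_def)

lemma foldr_prod_ev:
  assumes "\<And>k. parsp False (ge k)" "distinct xs"
  shows "foldr (\<lambda>k acc. sp_mult (sp_pow (ge k) (f k)) acc) xs sp_one = Rep_ev (\<Prod>k\<in>set xs. Abs_ev (ge k) ^ f k)"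
  using assms(2)
proof (induction xs)
  case Nil then show ?case by (simp add: Rep_ev_one)
next
  case (Cons a xs)
  then show ?case by (simp add: Rep_ev_mult Rep_ev_pow assms(1))
qed

lemma EvI_prod:
  assumes "\<And>k. parsp False (ge k)"
  shows "EvI ge e = Rep_ev (\<Prod>k\<in>ks e. Abs_ev (ge k) ^ lk e k)"
  unfolding EvI_def by (subst foldr_prod_ev[OF assms]) simp_all

lemma keys_add_nat: "ks ((e1::'a \<Rightarrow>\<^sub>0 nat) + e2) = ks e1 \<union> ks e2"
  by (auto simp: in_keys_iff lookup_add)

lemma EvI_add:
  assumes "\<And>k. parsp False (ge k)"
  shows "EvI ge (e1 + e2) = sp_mult (EvI ge e1) (EvI ge e2)"
proof -
  let ?a = "\<lambda>k. Abs_ev (ge k)"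
  let ?K = "ks e1 \<union> ks e2"
  have f: "finite ?K" by simp
  have "(\<Prod>k\<in>ks (e1 + e2). ?a k ^ lk (e1 + e2) k) = (\<Prod>k\<in>?K. ?a k ^ lk e1 k * ?a k ^ lk e2 k)"
    by (simp add: keys_add_nat lookup_add power_add)
  also have "\<dots> = (\<Prod>k\<in>?K. ?a k ^ lk e1 k) * (\<Prod>k\<in>?K. ?a k ^ lk e2 k)"
    by (rule prod.distrib)
  also have "(\<Prod>k\<in>?K. ?a k ^ lk e1 k) = (\<Prod>k\<in>ks e1. ?a k ^ lk e1 k)"
    by (rule prod.mono_neutral_right) (auto simp: in_keys_iff)
  also have "(\<Prod>k\<in>?K. ?a k ^ lk e2 k) = (\<Prod>k\<in>ks e2. ?a k ^ lk e2 k)"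
    by (rule prod.mono_neutral_right) (auto simp: in_keys_iff)
  finally show ?thesis
    by (simp add: EvI_prod[OF assms] Rep_ev_mult)
qed

lemma EvI_par:
  assumes "\<And>k. parsp False (ge k)"
  shows "parsp False (EvI ge e)"
  by (simp add: EvI_prod[OF assms] Rep_ev_par)

lemma EvI_zero[simp]: "EvI ge 0 = sp_one"
  by (simp add: EvI_def)

lemma OdI_empty[simp]: "OdI go {} = sp_one"
  by (simp add: OdI_def)

lemma OdI_insert_min:
  assumes "finite T" "\<forall>t\<in>T. a < t"
  shows "OdI go (insert a T) = sp_mult (go a) (OdI go T)"
proof -
  have m: "Min (insert a T) = a" using assms by (auto intro: Min_eqI less_imp_le)
  have r: "insert a T - {a} = T" using assms by auto
  show ?thesis unfolding OdI_def
    by (subst sorted_list_of_set_nonempty) (use assms m r in auto)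
qed

lemma OdI_par:
  assumes "\<And>j. parsp True (go j)" "finite T"
  shows "parsp (odd (card T)) (OdI go T)"
  using assms(2)
proof (induction T rule: finite_linorder_min_induct)
  case empty then show ?case by (simp add: parsp_one)
next
  case (insert b A)
  have "b \<notin> A" using insert.hyps by auto
  then show ?case using insert
    by (simp add: OdI_insert_min parsp_mult[OF assms(1) insert.IH, simplified])
qed


lemma sp_mult_uminus_left: "sp_mult (- u) v = - sp_mult u v"
  by (metis sp_smult_m1 sp_smult_mult_left)

lemma finsp_OdI:
  assumes "\<And>j. finsp (go j)"
  shows "finsp (OdI go T)"
proof -
  have "finsp (foldr (\<lambda>j acc. sp_mult (go j) acc) xs sp_one)" for xs
    by (induction xs) (simp_all add: finsp_one finsp_mult assms)
  then show ?thesis by (simp add: OdI_def)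
qed

lemma finsp_EvI:
  assumes "\<And>k. finsp (ge k)"
  shows "finsp (EvI ge e)"
proof -
  have "finsp (foldr (\<lambda>k acc. sp_mult (sp_pow (ge k) (lk e k)) acc) xs sp_one)" for xs
    by (induction xs) (simp_all add: finsp_one finsp_mult finsp_pow assms)
  then show ?thesis by (simp add: EvI_def)
qed

lemma OdI_left:
  assumes GO: "\<And>j. parsp True (go j)" and SQ: "\<And>j. sp_mult (go j) (go j) = 0" and T: "finite T"
  shows "sp_mult (go j) (OdI go T) =
    (if j \<in> T then 0 else sp_smult ((-1) ^ card {t\<in>T. t < j}) (OdI go (insert j T)))"
  using T
proof (induction T rule: finite_linorder_min_induct)
  case empty
  show ?case by (simp add: OdI_insert_min)
next
  case (insert b A)
  have fgo: "finsp (go j')" for j' using GO parsp_finsp by blast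
  have fX: "finsp (OdI go A)" by (rule finsp_OdI[OF fgo])
  have bA: "b \<notin> A" using insert.hyps by auto
  have OI: "OdI go (insert b A) = sp_mult (go b) (OdI go A)"
    by (rule OdI_insert_min) (use insert.hyps in auto)
  consider "j = b" | "j < b" | "b < j" by fastforce
  then show ?case
  proof cases
    case 1
    have "sp_mult (go j) (OdI go (insert b A)) = sp_mult (sp_mult (go j) (go j)) (OdI go A)"
      unfolding OI 1 by (rule sp_mult_assoc[symmetric]) (simp_all add: fgo fX)
    then show ?thesis using 1 SQ by simp
  next
    case 2
    have e: "{t \<in> insert b A. t < j} = {}" using 2 insert.hyps by auto
    have "OdI go (insert j (insert b A)) = sp_mult (go j) (OdI go (insert b A))"
      by (rule OdI_insert_min) (use 2 insert.hyps in auto)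
    moreover have "j \<notin> insert b A" using 2 insert.hyps by auto
    ultimately show ?thesis unfolding e by simp
  next
    case 3
    have "sp_mult (go j) (OdI go (insert b A)) = sp_mult (sp_mult (go j) (go b)) (OdI go A)"
      unfolding OI by (rule sp_mult_assoc[symmetric]) (simp_all add: fgo fX)
    also have "sp_mult (go j) (go b) = - sp_mult (go b) (go j)"
      by (rule sp_mult_anticomm[OF GO GO])
    also have "sp_mult (- sp_mult (go b) (go j)) (OdI go A) = - sp_mult (go b) (sp_mult (go j) (OdI go A))"
      by (simp add: sp_mult_uminus_left sp_mult_assoc fgo fX)
    finally have L: "sp_mult (go j) (OdI go (insert b A)) = - sp_mult (go b) (sp_mult (go j) (OdI go A))" .
    show ?thesis
    proof (cases "j \<in> A")
      case True
      then show ?thesis using L insert.IH by simp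
    next
      case False
      have c: "card {t \<in> insert b A. t < j} = Suc (card {t \<in> A. t < j})"
      proof -
        have "{t \<in> insert b A. t < j} = insert b {t \<in> A. t < j}" using 3 by auto
        then show ?thesis using bA insert.hyps(1) by simp
      qed
      have OI2: "OdI go (insert b (insert j A)) = sp_mult (go b) (OdI go (insert j A))"
        by (rule OdI_insert_min) (use 3 insert.hyps in auto)
      have "sp_mult (go j) (OdI go (insert b A)) = - sp_mult (go b) (sp_smult ((-1) ^ card {t\<in>A. t < j}) (OdI go (insert j A)))"
        using L insert.IH False by simp
      also have "\<dots> = sp_smult (- ((-1) ^ card {t \<in> A. t < j})) (OdI go (insert j (insert b A)))"
        by (simp add: sp_smult_mult_right OI2[symmetric] insert_commute sp_smult_m1[symmetric])
      also have "\<dots> = sp_smult ((-1) ^ card {t \<in> insert b A. t < j}) (OdI go (insert j (insert b A)))"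
        unfolding c by simp
      finally have R: "sp_mult (go j) (OdI go (insert b A)) = sp_smult ((-1) ^ card {t \<in> insert b A. t < j}) (OdI go (insert j (insert b A)))" .
      have nj: "j \<notin> insert b A" using False 3 by auto
      show ?thesis unfolding R using nj by (simp only: if_False)
    qed
  qed
qed

lemma OdI_mult:
  assumes GO: "\<And>j. parsp True (go j)" and SQ: "\<And>j. sp_mult (go j) (go j) = 0"
    and T1: "finite T1" and T2: "finite T2"
  shows "sp_mult (OdI go T1) (OdI go T2) =
    (if T1 \<inter> T2 = {} then sp_smult ((-1) ^ inv_count T1 T2) (OdI go (T1 \<union> T2)) else 0)"
  using T1
proof (induction T1 rule: finite_linorder_min_induct)
  case empty
  show ?case by simp
next
  case (insert b A)
  have fgo: "finsp (go j')" for j' using GO parsp_finsp by blast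
  have bA: "b \<notin> A" using insert.hyps by auto
  have OI: "OdI go (insert b A) = sp_mult (go b) (OdI go A)"
    by (rule OdI_insert_min) (use insert.hyps in auto)
  have L: "sp_mult (OdI go (insert b A)) (OdI go T2) = sp_mult (go b) (sp_mult (OdI go A) (OdI go T2))"
    unfolding OI by (rule sp_mult_assoc) (simp_all add: fgo finsp_OdI)
  show ?case
  proof (cases "A \<inter> T2 = {}")
    case False
    then show ?thesis using L insert.IH by auto
  next
    case True
    have L2: "sp_mult (OdI go (insert b A)) (OdI go T2) = sp_smult ((-1) ^ inv_count A T2) (sp_mult (go b) (OdI go (A \<union> T2)))"
      using L insert.IH True by (simp add: sp_smult_mult_right)
    show ?thesis
    proof (cases "b \<in> T2")
      case True
      have OL: "sp_mult (go b) (OdI go (A \<union> T2)) = (if b \<in> A \<union> T2 then 0 else sp_smult ((-1) ^ card {t\<in>A \<union> T2. t < b}) (OdI go (insert b (A \<union> T2))))"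
        by (rule OdI_left[OF GO SQ]) (use insert.hyps(1) T2 in simp)
      then show ?thesis using L2 True by auto
    next
      case False
      have c: "card {t \<in> A \<union> T2. t < b} = card {t \<in> T2. t < b}"
      proof -
        have "{t \<in> A \<union> T2. t < b} = {t \<in> T2. t < b}" using insert.hyps(2) by auto
        then show ?thesis by simp
      qed
      have i: "inv_count (insert b A) T2 = card {t \<in> T2. t < b} + inv_count A T2"
      proof -
        have "inv_count ({b} \<union> A) T2 = inv_count {b} T2 + inv_count A T2"
          by (rule inv_count_Un_left) (use bA insert.hyps(1) T2 in auto)
        then show ?thesis by (simp add: inv_count_single)
      qed
      have OL: "sp_mult (go b) (OdI go (A \<union> T2)) = (if b \<in> A \<union> T2 then 0 else sp_smult ((-1) ^ card {t\<in>A \<union> T2. t < b}) (OdI go (insert b (A \<union> T2))))"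
        by (rule OdI_left[OF GO SQ]) (use insert.hyps(1) T2 in simp)
      have "sp_mult (go b) (OdI go (A \<union> T2)) = sp_smult ((-1) ^ card {t \<in> T2. t < b}) (OdI go (insert b A \<union> T2))"
        using OL bA False unfolding c by simp
      then show ?thesis using L2 True False bA
        by (simp add: i power_add mult.commute)
    qed
  qed
qed


lemma MI_mult:
  assumes GE: "\<And>k. parsp False (ge k)" and GO: "\<And>j. parsp True (go j)"
    and SQ: "\<And>j. sp_mult (go j) (go j) = 0"
    and fm: "finite (snd m)" and fn: "finite (snd n)"
  shows "sp_mult (mono_image ge go m) (mono_image ge go n) =
    (if snd m \<inter> snd n = {} then sp_smult ((-1) ^ inv_count (snd m) (snd n))
        (mono_image ge go (fst m + fst n, snd m \<union> snd n)) else 0)"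
proof -
  let ?E1 = "EvI ge (fst m)" and ?E2 = "EvI ge (fst n)" and ?O1 = "OdI go (snd m)" and ?O2 = "OdI go (snd n)"
  have fge: "finsp (ge k)" for k using GE parsp_finsp by blast
  have fgo: "finsp (go j)" for j using GO parsp_finsp by blast
  have fE1: "finsp ?E1" and fE2: "finsp ?E2" by (simp_all add: finsp_EvI fge)
  have fO1: "finsp ?O1" and fO2: "finsp ?O2" by (simp_all add: finsp_OdI fgo)
  have pE2: "parsp False ?E2" by (rule EvI_par[OF GE])
  have pO1: "parsp (odd (card (snd m))) ?O1" by (rule OdI_par[OF GO fm])
  have "sp_mult (mono_image ge go m) (mono_image ge go n) = sp_mult (sp_mult ?E1 ?O1) (sp_mult ?E2 ?O2)"
    by (simp add: mono_image_eq)
  also have "\<dots> = sp_mult ?E1 (sp_mult ?O1 (sp_mult ?E2 ?O2))"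
    by (rule sp_mult_assoc) (simp_all add: fE1 fO1 fE2 fO2 finsp_mult)
  also have "sp_mult ?O1 (sp_mult ?E2 ?O2) = sp_mult (sp_mult ?O1 ?E2) ?O2"
    by (rule sp_mult_assoc[symmetric]) (simp_all add: fO1 fE2 fO2)
  also have "sp_mult ?O1 ?E2 = sp_mult ?E2 ?O1"
    by (rule sp_mult_comm_even[OF pE2 pO1])
  also have "sp_mult (sp_mult ?E2 ?O1) ?O2 = sp_mult ?E2 (sp_mult ?O1 ?O2)"
    by (rule sp_mult_assoc) (simp_all add: fO1 fE2 fO2)
  also have "sp_mult ?E1 (sp_mult ?E2 (sp_mult ?O1 ?O2)) = sp_mult (sp_mult ?E1 ?E2) (sp_mult ?O1 ?O2)"
    by (rule sp_mult_assoc[symmetric]) (simp_all add: fE1 fO1 fE2 fO2 finsp_mult)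
  also have "sp_mult ?E1 ?E2 = EvI ge (fst m + fst n)"
    by (rule EvI_add[OF GE, symmetric])
  also have "sp_mult ?O1 ?O2 = (if snd m \<inter> snd n = {} then sp_smult ((-1) ^ inv_count (snd m) (snd n)) (OdI go (snd m \<union> snd n)) else 0)"
    by (rule OdI_mult[OF GO SQ fm fn])
  finally show ?thesis
    by (simp add: mono_image_eq sp_smult_mult_right)
qed

section \<open>Algebra maps hom_ext\<close>

lemma hom_ext_expand:
  assumes "finite A" "ks f \<subseteq> A"
  shows "hom_ext ge go f = (\<Sum>m\<in>A. sp_smult (lk f m) (mono_image ge go m))"
  unfolding hom_ext_def
  by (rule sum.mono_neutral_left) (use assms in \<open>auto simp: in_keys_iff\<close>)

lemma hom_ext_zero[simp]: "hom_ext ge go 0 = 0"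
  by (simp add: hom_ext_def)

lemma hom_ext_add: "hom_ext ge go (x + y) = hom_ext ge go x + hom_ext ge go y"
proof -
  let ?A = "ks x \<union> ks y"
  have "hom_ext ge go (x + y) = (\<Sum>m\<in>?A. sp_smult (lk (x + y) m) (mono_image ge go m))"
    by (rule hom_ext_expand) (simp_all add: keys_add)
  also have "\<dots> = (\<Sum>m\<in>?A. sp_smult (lk x m) (mono_image ge go m)) + (\<Sum>m\<in>?A. sp_smult (lk y m) (mono_image ge go m))"
  proof -
    have sd: "sp_smult (lk (x + y) m) z = sp_smult (lk x m) z + sp_smult (lk y m) z" for m z
      by (rule poly_mapping_eqI) (simp add: lookup_add distrib_right)
    show ?thesis by (simp only: sd sum.distrib)
  qed
  also have "(\<Sum>m\<in>?A. sp_smult (lk x m) (mono_image ge go m)) = hom_ext ge go x"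
    by (rule hom_ext_expand[symmetric]) auto
  also have "(\<Sum>m\<in>?A. sp_smult (lk y m) (mono_image ge go m)) = hom_ext ge go y"
    by (rule hom_ext_expand[symmetric]) auto
  finally show ?thesis .
qed

lemma hom_ext_sum: "hom_ext ge go (\<Sum>i\<in>I. f i) = (\<Sum>i\<in>I. hom_ext ge go (f i))"
  by (induction I rule: infinite_finite_induct) (simp_all add: hom_ext_add)

lemma hom_ext_single: "hom_ext ge go (sg m c) = sp_smult c (mono_image ge go m)"
  by (subst hom_ext_expand[of "{m}"]) auto

lemma hom_ext_smult: "hom_ext ge go (sp_smult c x) = sp_smult c (hom_ext ge go x)"
proof -
  have "hom_ext ge go (sp_smult c x) = (\<Sum>m\<in>ks x. sp_smult (lk (sp_smult c x) m) (mono_image ge go m))"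
    by (rule hom_ext_expand) (simp_all add: keys_sp_smult)
  then show ?thesis by (simp add: hom_ext_def sp_smult_sum)
qed

lemma hom_ext_mono_term:
  assumes GE: "\<And>k. parsp False (ge k)" and GO: "\<And>j. parsp True (go j)"
    and SQ: "\<And>j. sp_mult (go j) (go j) = 0"
    and fm: "finite (snd m)" and fn: "finite (snd n)"
  shows "hom_ext ge go (mono_term c m n) = sp_smult c (sp_mult (mono_image ge go m) (mono_image ge go n))"
  by (simp add: MI_mult[OF GE GO SQ fm fn] mono_term_def hom_ext_single)

theorem hom_ext_mult:
  assumes GE: "\<And>k. parsp False (ge k)" and GO: "\<And>j. parsp True (go j)"
    and SQ: "\<And>j. sp_mult (go j) (go j) = 0"
    and fx: "finsp x" and fy: "finsp y"
  shows "hom_ext ge go (sp_mult x y) = sp_mult (hom_ext ge go x) (hom_ext ge go y)"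
proof -
  have "hom_ext ge go (sp_mult x y) = (\<Sum>m\<in>ks x. \<Sum>n\<in>ks y. hom_ext ge go (mono_term (lk x m * lk y n) m n))"
    by (simp add: sp_mult_def hom_ext_sum)
  also have "\<dots> = (\<Sum>m\<in>ks x. \<Sum>n\<in>ks y. sp_smult (lk x m * lk y n) (sp_mult (mono_image ge go m) (mono_image ge go n)))"
    using fx fy by (intro sum.cong refl hom_ext_mono_term[OF GE GO SQ]) (auto simp: finsp_def allk_def)
  also have "\<dots> = (\<Sum>m\<in>ks x. \<Sum>n\<in>ks y. sp_mult (sp_smult (lk x m) (mono_image ge go m)) (sp_smult (lk y n) (mono_image ge go n)))"
    by (simp add: sp_smult_mult_left sp_smult_mult_right mult.commute)
  also have "\<dots> = sp_mult (hom_ext ge go x) (hom_ext ge go y)"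
    unfolding hom_ext_def by (rule sp_mult_sum_sum[symmetric])
  finally show ?thesis .
qed

lemma MI_zero: "mono_image ge go (0, {}) = sp_one"
  by (simp add: mono_image_eq)

lemma hom_ext_one[simp]: "hom_ext ge go sp_one = sp_one"
  by (simp add: sp_const_def hom_ext_single MI_zero)

lemma sp_pow_1[simp]: "sp_pow x 1 = x" "sp_pow x (Suc 0) = x"
  by (simp_all add: sp_pow_def)

lemma hom_ext_even[simp]: "hom_ext ge go (sp_even k) = ge k"
  by (simp add: sp_even_def hom_ext_single mono_image_eq EvI_def)

lemma hom_ext_odd[simp]: "hom_ext ge go (sp_odd j) = go j"
  by (simp add: sp_odd_def hom_ext_single mono_image_eq OdI_def)

lemma hom_ext_pow:
  assumes GE: "\<And>k. parsp False (ge k)" and GO: "\<And>j. parsp True (go j)"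
    and SQ: "\<And>j. sp_mult (go j) (go j) = 0" and fx: "finsp x"
  shows "hom_ext ge go (sp_pow x n) = sp_pow (hom_ext ge go x) n"
  by (induction n) (simp_all add: sp_pow_Suc hom_ext_mult[OF GE GO SQ] fx finsp_pow)

lemma finsp_MI:
  assumes "\<And>k. finsp (ge k)" "\<And>j. finsp (go j)"
  shows "finsp (mono_image ge go m)"
  by (simp add: mono_image_eq finsp_mult finsp_EvI finsp_OdI assms)

lemma finsp_hom_ext:
  assumes "\<And>k. finsp (ge k)" "\<And>j. finsp (go j)"
  shows "finsp (hom_ext ge go x)"
  unfolding hom_ext_def by (intro finsp_sum finsp_smult finsp_MI assms)

lemma hom_ext_foldr:
  assumes GE: "\<And>k. parsp False (ge k)" and GO: "\<And>j. parsp True (go j)"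
    and SQ: "\<And>j. sp_mult (go j) (go j) = 0" and fg: "\<And>k. finsp (g k)"
  shows "hom_ext ge go (foldr (\<lambda>k acc. sp_mult (g k) acc) xs sp_one)
       = foldr (\<lambda>k acc. sp_mult (hom_ext ge go (g k)) acc) xs sp_one"
proof (induction xs)
  case Nil then show ?case by simp
next
  case (Cons a xs)
  have "finsp (foldr (\<lambda>k acc. sp_mult (g k) acc) xs sp_one)"
    by (induction xs) (simp_all add: finsp_one finsp_mult fg)
  then show ?case using Cons by (simp add: hom_ext_mult[OF GE GO SQ] fg)
qed

lemma hom_ext_comp:
  assumes GE: "\<And>k. parsp False (ge k)" and GO: "\<And>j. parsp True (go j)"
    and SQ: "\<And>j. sp_mult (go j) (go j) = 0"
    and F1: "\<And>k. finsp (ge1 k)" and F2: "\<And>j. finsp (go1 j)"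
  shows "hom_ext ge go (hom_ext ge1 go1 x) = hom_ext (\<lambda>k. hom_ext ge go (ge1 k)) (\<lambda>j. hom_ext ge go (go1 j)) x"
proof -
  have MI: "hom_ext ge go (mono_image ge1 go1 m) = mono_image (\<lambda>k. hom_ext ge go (ge1 k)) (\<lambda>j. hom_ext ge go (go1 j)) m" for m
  proof -
    have e: "hom_ext ge go (EvI ge1 e) = EvI (\<lambda>k. hom_ext ge go (ge1 k)) e" for e
      unfolding EvI_def
      by (subst hom_ext_foldr[OF GE GO SQ]) (simp_all add: finsp_pow F1 hom_ext_pow[OF GE GO SQ])
    have o: "hom_ext ge go (OdI go1 T) = OdI (\<lambda>j. hom_ext ge go (go1 j)) T" for T
      unfolding OdI_def by (rule hom_ext_foldr[OF GE GO SQ F2])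
    show ?thesis
      by (simp add: mono_image_eq hom_ext_mult[OF GE GO SQ] finsp_EvI finsp_OdI F1 F2 e o)
  qed
  have "hom_ext ge go (hom_ext ge1 go1 x) = hom_ext ge go (\<Sum>m\<in>ks x. sp_smult (lk x m) (mono_image ge1 go1 m))"
    by (simp only: hom_ext_def[of ge1 go1 x])
  also have "\<dots> = (\<Sum>m\<in>ks x. sp_smult (lk x m) (hom_ext ge go (mono_image ge1 go1 m)))"
    by (simp only: hom_ext_sum hom_ext_smult)
  also have "\<dots> = (\<Sum>m\<in>ks x. sp_smult (lk x m) (mono_image (\<lambda>k. hom_ext ge go (ge1 k)) (\<lambda>j. hom_ext ge go (go1 j)) m))"
    by (simp only: MI)
  also have "\<dots> = hom_ext (\<lambda>k. hom_ext ge go (ge1 k)) (\<lambda>j. hom_ext ge go (go1 j)) x"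
    by (rule hom_ext_def[symmetric])
  finally show ?thesis .
qed

lemma hom_ext_cong:
  assumes "\<And>m k. m \<in> ks f \<Longrightarrow> k \<in> ks (fst m) \<Longrightarrow> ge k = ge' k"
    and "\<And>m j. m \<in> ks f \<Longrightarrow> j \<in> snd m \<Longrightarrow> go j = go' j"
    and "\<And>m. m \<in> ks f \<Longrightarrow> finite (snd m)"
  shows "hom_ext ge go f = hom_ext ge' go' f"
  unfolding hom_ext_def mono_image_eq EvI_def OdI_def
proof (rule sum.cong[OF refl], rule arg_cong2[where f=sp_smult, OF refl], rule arg_cong2[where f=sp_mult])
  fix m assume m: "m \<in> ks f"
  show "foldr (\<lambda>k. sp_mult (sp_pow (ge k) (lk (fst m) k))) (sorted_list_of_set (ks (fst m))) sp_one =
        foldr (\<lambda>k. sp_mult (sp_pow (ge' k) (lk (fst m) k))) (sorted_list_of_set (ks (fst m))) sp_one"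
  proof (rule foldr_cong[OF refl refl])
    fix a k assume "k \<in> set (sorted_list_of_set (ks (fst m)))"
    then have "k \<in> ks (fst m)" by simp
    then show "sp_mult (sp_pow (ge k) (lk (fst m) k)) a = sp_mult (sp_pow (ge' k) (lk (fst m) k)) a"
      using assms(1)[OF m] by simp
  qed
  show "foldr (\<lambda>j. sp_mult (go j)) (sorted_list_of_set (snd m)) sp_one =
        foldr (\<lambda>j. sp_mult (go' j)) (sorted_list_of_set (snd m)) sp_one"
  proof (rule foldr_cong[OF refl refl])
    fix a j assume "j \<in> set (sorted_list_of_set (snd m))"
    then have "j \<in> snd m" using assms(3)[OF m] by simp
    then show "sp_mult (go j) a = sp_mult (go' j) a"
      using assms(2)[OF m] by simp
  qed
qed


section \<open>Characteristic not 2\<close>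

lemma two_torsion:
  assumes "odd (card (UNIV::'k::{field,finite} set))"
  shows "\<forall>c::'k. c + c = 0 \<longrightarrow> c = 0"
proof (intro allI impI, rule ccontr)
  fix c :: 'k assume h: "c + c = 0" "c \<noteq> 0"
  have h2: "(1::'k) + 1 = 0"
  proof -
    have "c * (1 + 1) = c + c" by (simp only: distrib_left mult_1_right)
    then have "c * (1 + 1) = 0" using h(1) by simp
    then show ?thesis using h(2) by (metis mult_eq_0_iff)
  qed
  have inv: "x + 1 + 1 = x" for x :: 'k using h2 by (simp add: add.assoc)
  have ne: "x + 1 \<noteq> x" for x :: 'k by simp
  let ?C = "(\<lambda>x::'k. {x, x + 1}) ` UNIV"
  have "2 * card ?C = card (\<Union>?C)"
  proof (rule card_partition)
    show "finite ?C" by simp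
    show "finite (\<Union>?C)" by simp
    show "card c = 2" if "c \<in> ?C" for c using ne that by (auto simp: card_insert_if)
    show "c1 \<inter> c2 = {}" if "c1 \<in> ?C" "c2 \<in> ?C" "c1 \<noteq> c2" for c1 c2
    proof -
      from that obtain x y where xy: "c1 = {x, x + 1}" "c2 = {y, y + 1}" by blast
      show "c1 \<inter> c2 = {}"
      proof (rule ccontr)
        assume "c1 \<inter> c2 \<noteq> {}"
        then have "x = y \<or> x = y + 1 \<or> x + 1 = y \<or> x + 1 = y + 1" using xy by auto
        then have "c1 = c2" using xy inv by (auto simp: insert_commute)
        with that(3) show False by simp
      qed
    qed
  qed
  moreover have "\<Union>?C = UNIV" by auto
  ultimately have "even (card (UNIV::'k set))" by (metis dvd_triv_left)
  then show False using assms by simp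
qed

lemma parsp_sp_even[simp]: "parsp False (sp_even k)"
  by (simp add: parsp_def allk_def sp_even_def)

lemma parsp_sp_odd[simp]: "parsp True (sp_odd k)"
  by (simp add: parsp_def allk_def sp_odd_def)

lemma parsp_gens[simp]:
  "parsp False (zeta k)" "parsp False (zetaL k)" "parsp False (zetaR k)"
  "parsp True (taubar k)" "parsp True (taubarL k)" "parsp True (taubarR k)"
  by (simp_all add: zeta_def zetaL_def zetaR_def taubar_def taubarL_def taubarR_def parsp_one)

lemma finsp_gens[simp]:
  "finsp (zeta k)" "finsp (zetaL k)" "finsp (zetaR k)"
  "finsp (taubar k)" "finsp (taubarL k)" "finsp (taubarR k)"
  by (rule parsp_finsp, rule parsp_gens)+

lemma hom_ext_zeta_gen:
  "hom_ext ge go (zeta k) = (if k = 0 then sp_one else ge k)"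
  by (simp add: zeta_def)

lemma hom_ext_zetaR_gen:
  "hom_ext ge go (zetaR k) = (if k = 0 then sp_one else ge (True, k))"
  by (simp add: zetaR_def)

lemma hom_ext_zetaL_gen:
  "hom_ext ge go (zetaL k) = (if k = 0 then sp_one else ge (False, k))"
  by (simp add: zetaL_def)

lemma hom_ext_tau[simp]: "hom_ext ge go (taubar k) = go k"
  by (simp add: taubar_def)

lemma hom_ext_tauR[simp]: "hom_ext ge go (taubarR k) = go (True, k)"
  by (simp add: taubarR_def)

lemma hom_ext_tauL[simp]: "hom_ext ge go (taubarL k) = go (False, k)"
  by (simp add: taubarL_def)

lemma phi_zeta: "phi i (zeta k) = zeta (k - 1)"
  by (simp add: phi_def hom_ext_zeta_gen zeta_def)

lemma phi_taubar: "phi i (taubar j) = taubar (j - 1)"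
  by (simp add: phi_def)

lemma embR_zeta: "embR (zeta k) = zetaR k"
  by (simp add: embR_def hom_ext_zeta_gen zetaR_def)

lemma embR_taubar: "embR (taubar k) = taubarR k"
  by (simp add: embR_def)

definition prE :: "bool \<times> nat \<Rightarrow> 'k::comm_ring_1 Atens" where
  "prE = (\<lambda>(s,k). if s then zetaR k else (if k = 0 then sp_one else 0))"

definition prO :: "nat \<Rightarrow> bool \<times> nat \<Rightarrow> 'k::comm_ring_1 Atens" where
  "prO i = (\<lambda>(s,j). if s then taubarR j else (if j \<le> i then taubarL j else 0))"

lemma projE_alt: "projE i = hom_ext prE (prO i)"
  by (simp add: projE_def prE_def prO_def)

lemma prO_apply: "prO i (s,j) = (if s then taubarR j else if j \<le> i then taubarL j else 0)"
  by (simp add: prO_def)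

lemma prE_par: "parsp False (prE x)"
  by (cases x) (simp add: prE_def parsp_one)

lemma prO_par: "parsp True (prO i x)"
  by (cases x) (simp add: prO_def)

definition psiE :: "nat \<Rightarrow> nat \<Rightarrow> 'k::comm_ring_1 Atens" where
  "psiE p n = (\<Sum>b\<le>n. sp_mult (zetaL b) (sp_pow (zetaR (n - b)) (p ^ b)))"

definition psiO :: "nat \<Rightarrow> nat \<Rightarrow> 'k::comm_ring_1 Atens" where
  "psiO p n = taubarR n + (\<Sum>b\<le>n. sp_mult (taubarL b) (sp_pow (zetaR (n - b)) (p ^ b)))"

lemma psi_alt: "psi p = hom_ext (psiE p) (psiO p)"
  unfolding psi_def psiE_def[abs_def] psiO_def[abs_def] by simp

lemma psiE_par: "parsp False (psiE p n)"
  unfolding psiE_def by (intro parsp_sum parsp_mult_FF parsp_pow parsp_gens)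

lemma psiO_par: "parsp True (psiO p n)"
  unfolding psiO_def by (intro parsp_add parsp_sum parsp_mult_TF parsp_pow parsp_gens)

definition idE :: "nat \<Rightarrow> bool \<times> nat \<Rightarrow> 'k::comm_ring_1 Atens" where
  "idE i = (\<lambda>(s,k). if s then embR (phi i (zeta k)) else zetaL k)"

definition idO :: "nat \<Rightarrow> bool \<times> nat \<Rightarrow> 'k::comm_ring_1 Atens" where
  "idO i = (\<lambda>(s,j). if s then embR (phi i (taubar j)) else taubarL j)"

lemma idt_alt: "id_tensor (phi i) = hom_ext (idE i) (idO i)"
  by (simp add: id_tensor_def idE_def idO_def)

lemma idE_eq: "idE i (s,k) = (if s then zetaR (k - 1) else zetaL k)"
  by (simp add: idE_def phi_zeta embR_zeta)

lemma idO_eq: "idO i (s,j) = (if s then taubarR (j - 1) else taubarL j)"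
  by (simp add: idO_def phi_taubar embR_taubar)

lemma idE_par: "parsp False (idE i x)"
  by (cases x) (simp add: idE_eq)

lemma idO_par: "parsp True (idO i x)"
  by (cases x) (simp add: idO_eq)


lemma hom_ext_mp:
  assumes GE: "\<And>k. parsp False (ge k)" and GO: "\<And>j. parsp True (go j)"
    and SQ: "\<And>j. sp_mult (go j) (go j) = 0" and fa: "finsp a" and fc: "finsp c"
  shows "hom_ext ge go (sp_mult a (sp_pow c N)) = sp_mult (hom_ext ge go a) (sp_pow (hom_ext ge go c) N)"
  by (simp add: hom_ext_mult[OF GE GO SQ] hom_ext_pow[OF GE GO SQ] fa fc finsp_pow)

lemma sp_mult_if_left: "sp_mult (if c then X else 0) Y = (if c then sp_mult X Y else 0)"
  by simp

lemma projE_zetaR: "hom_ext prE (prO i) (zetaR k) = zetaR k"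
  by (cases k) (simp_all add: hom_ext_zetaR_gen prE_def zetaR_def)

lemma projE_zetaL: "hom_ext prE (prO i) (zetaL b) = (if b = 0 then sp_one else 0)"
  by (simp add: hom_ext_zetaL_gen prE_def)

lemma projE_tauR: "hom_ext prE (prO i) (taubarR j) = taubarR j"
  by (simp add: prO_def)

lemma projE_tauL: "hom_ext prE (prO i) (taubarL b) = (if b \<le> i then taubarL b else 0)"
  by (simp add: prO_def)

lemma prSQ:
  assumes TWO: "\<forall>c::'k::comm_ring_1. c + c = 0 \<longrightarrow> c = 0"
  shows "sp_mult (prO i x) (prO i x) = (0::'k Atens)"
  by (rule odd_sq[OF TWO prO_par])

lemma psiSQ:
  assumes TWO: "\<forall>c::'k::comm_ring_1. c + c = 0 \<longrightarrow> c = 0"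
  shows "sp_mult (psiO p n) (psiO p n) = (0::'k Atens)"
  by (rule odd_sq[OF TWO psiO_par])

lemma idSQ:
  assumes TWO: "\<forall>c::'k::comm_ring_1. c + c = 0 \<longrightarrow> c = 0"
  shows "sp_mult (idO i x) (idO i x) = (0::'k Atens)"
  by (rule odd_sq[OF TWO idO_par])

lemma projE_psiE:
  assumes TWO: "\<forall>c::'k::comm_ring_1. c + c = 0 \<longrightarrow> c = 0"
  shows "hom_ext prE (prO i) (psiE p n) = (zetaR n :: 'k Atens)"
proof -
  have "hom_ext prE (prO i) (psiE p n) = (\<Sum>b\<le>n. hom_ext prE (prO i) (sp_mult (zetaL b) (sp_pow (zetaR (n - b)) (p ^ b))))"
    by (simp add: psiE_def hom_ext_sum)
  also have "\<dots> = (\<Sum>b\<le>n. if b = 0 then sp_pow (zetaR (n - b)) (p ^ b) else (0::'k Atens))"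
    by (intro sum.cong refl)
       (simp add: hom_ext_mp[OF prE_par prO_par prSQ[OF TWO]] projE_zetaL projE_zetaR)
  also have "\<dots> = zetaR n" by (simp add: sum.delta)
  finally show ?thesis .
qed

lemma projE_psiO:
  assumes TWO: "\<forall>c::'k::comm_ring_1. c + c = 0 \<longrightarrow> c = 0"
  shows "hom_ext prE (prO i) (psiO p n) = taubarR n +
    (\<Sum>b\<le>n. if b \<le> i then sp_mult (taubarL b) (sp_pow (zetaR (n - b)) (p ^ b)) else (0::'k Atens))"
proof -
  have "hom_ext prE (prO i) (psiO p n) = taubarR n + (\<Sum>b\<le>n. hom_ext prE (prO i) (sp_mult (taubarL b) (sp_pow (zetaR (n - b)) (p ^ b))))"
    by (simp add: psiO_def hom_ext_sum hom_ext_add prO_def)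
  also have "(\<Sum>b\<le>n. hom_ext prE (prO i) (sp_mult (taubarL b) (sp_pow (zetaR (n - b)) (p ^ b))))
     = (\<Sum>b\<le>n. if b \<le> i then sp_mult (taubarL b) (sp_pow (zetaR (n - b)) (p ^ b)) else (0::'k Atens))"
    by (intro sum.cong refl)
       (simp add: hom_ext_mp[OF prE_par prO_par prSQ[OF TWO]] prO_apply projE_zetaR)
  finally show ?thesis .
qed

lemma projE_psi_zeta:
  assumes TWO: "\<forall>c::'k::comm_ring_1. c + c = 0 \<longrightarrow> c = 0"
  shows "hom_ext prE (prO i) (hom_ext (psiE p) (psiO p) (zeta c)) = (zetaR c :: 'k Atens)"
  by (cases "c = 0") (simp_all add: hom_ext_zeta_gen projE_psiE[OF TWO] zetaR_def)

lemma idt_zetaR: "hom_ext (idE i) (idO i) (zetaR k) = zetaR (k - 1)"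
  by (cases k) (simp_all add: hom_ext_zetaR_gen idE_eq zetaR_def)

lemma idt_tauR: "hom_ext (idE i) (idO i) (taubarR j) = taubarR (j - 1)"
  by (simp add: idO_eq)

lemma idt_tauL: "hom_ext (idE i) (idO i) (taubarL j) = taubarL j"
  by (simp add: idO_eq)

lemma odd_gen_eq:
  assumes TWO: "\<forall>c::'k::comm_ring_1. c + c = 0 \<longrightarrow> c = 0" and j: "j \<ge> i + 1"
  shows "hom_ext prE (prO i) (hom_ext (psiE p) (psiO p) (taubar (j - 1)))
       = hom_ext (idE i) (idO i) (hom_ext prE (prO i) (psiO p j) :: 'k Atens)"
proof -
  obtain j' where jj: "j = Suc j'" using j by (cases j) auto
  have ij: "\<not> j \<le> i" using j by simp
  have "hom_ext (idE i) (idO i) (hom_ext prE (prO i) (psiO p j) :: 'k Atens)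
     = taubarR (j - 1) + (\<Sum>b\<le>j. hom_ext (idE i) (idO i) (if b \<le> i then sp_mult (taubarL b) (sp_pow (zetaR (j - b)) (p ^ b)) else 0))"
    by (simp add: projE_psiO[OF TWO] hom_ext_add hom_ext_sum idO_eq)
  also have "(\<Sum>b\<le>j. hom_ext (idE i) (idO i) (if b \<le> i then sp_mult (taubarL b) (sp_pow (zetaR (j - b)) (p ^ b)) else (0::'k Atens)))
     = (\<Sum>b\<le>j. if b \<le> i then sp_mult (taubarL b) (sp_pow (zetaR (j - b - 1)) (p ^ b)) else 0)"
    by (intro sum.cong refl)
       (simp add: hom_ext_mp[OF idE_par idO_par idSQ[OF TWO]] idO_eq idt_zetaR)
  also have "\<dots> = (\<Sum>b\<le>j'. if b \<le> i then sp_mult (taubarL b) (sp_pow (zetaR (j' - b)) (p ^ b)) else 0)"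
    unfolding jj sum.atMost_Suc using ij jj
    by (simp, intro sum.cong refl) (simp add: Suc_diff_le)
  finally have R: "hom_ext (idE i) (idO i) (hom_ext prE (prO i) (psiO p j) :: 'k Atens)
     = taubarR j' + (\<Sum>b\<le>j'. if b \<le> i then sp_mult (taubarL b) (sp_pow (zetaR (j' - b)) (p ^ b)) else 0)"
    using jj by simp
  show ?thesis unfolding R using jj by (simp add: projE_psiO[OF TWO])
qed


lemma allk_foldr:
  assumes R0: "R (0,{})"
    and RC: "\<And>m n. R m \<Longrightarrow> R n \<Longrightarrow> snd m \<inter> snd n = {} \<Longrightarrow> R (fst m + fst n, snd m \<union> snd n)"
    and G: "\<And>k. k \<in> set xs \<Longrightarrow> allk R (g k)"
  shows "allk R (foldr (\<lambda>k acc. sp_mult (g k) acc) xs sp_one)"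
  using G
proof (induction xs)
  case Nil then show ?case by (simp add: allk_one R0)
next
  case (Cons a xs)
  then show ?case by (simp, intro allk_mult[where R=R, OF _ _ RC]) auto
qed

lemma allk_hom_ext:
  assumes R0: "R (0,{})"
    and RC: "\<And>m n. R m \<Longrightarrow> R n \<Longrightarrow> snd m \<inter> snd n = {} \<Longrightarrow> R (fst m + fst n, snd m \<union> snd n)"
    and GE: "\<And>m k. m \<in> ks f \<Longrightarrow> k \<in> ks (fst m) \<Longrightarrow> allk R (ge k)"
    and GO: "\<And>m j. m \<in> ks f \<Longrightarrow> j \<in> snd m \<Longrightarrow> allk R (go j)"
    and FIN: "\<And>m. m \<in> ks f \<Longrightarrow> finite (snd m)"
  shows "allk R (hom_ext ge go f)"
  unfolding hom_ext_def
proof (intro allk_sum allk_smult)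
  fix m assume m: "m \<in> ks f"
  have e: "allk R (EvI ge (fst m))"
    unfolding EvI_def
  proof (rule allk_foldr[OF R0 RC])
    fix k assume "k \<in> set (sorted_list_of_set (ks (fst m)))"
    then have "k \<in> ks (fst m)" by simp
    then show "allk R (sp_pow (ge k) (lk (fst m) k))" by (rule allk_pow[OF GE[OF m] R0 RC])
  qed
  have o: "allk R (OdI go (snd m))"
    unfolding OdI_def
  proof (rule allk_foldr[OF R0 RC])
    fix j assume "j \<in> set (sorted_list_of_set (snd m))"
    then have "j \<in> snd m" using FIN[OF m] by simp
    then show "allk R (go j)" by (rule GO[OF m])
  qed
  show "allk R (mono_image ge go m)"
    unfolding mono_image_eq by (rule allk_mult[where R=R, OF e o RC])
qed

lemma AmodE_phi:
  assumes A: "AmodE i f" and i: "i \<ge> 1"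
  shows "AmodE (i - 1) (phi i (f :: 'k::comm_ring_1 Astar))"
proof -
  let ?R = "\<lambda>m::(nat,nat) mono. 0 \<notin> ks (fst m) \<and> finite (snd m) \<and> snd m \<subseteq> {i..}"
  have "allk ?R (phi i f)"
    unfolding phi_def
  proof (rule allk_hom_ext)
    show "?R (0,{})" by simp
    show "?R (fst m + fst n, snd m \<union> snd n)" if "?R m" "?R n" for m n :: "(nat,nat) mono"
      using that by (simp add: keys_add_nat)
    show "allk ?R (zeta (k - 1) :: 'k Astar)" if "m \<in> ks f" "k \<in> ks (fst m)" for m k
    proof -
      have "0 \<notin> ks (fst m)" using A that(1) unfolding AmodE_def by blast
      then have "k \<noteq> 0" using that(2) by metis
      then show ?thesis
        by (cases "k - 1 = 0") (auto simp: zeta_def allk_def sp_even_def sp_const_def)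
    qed
    show "allk ?R (taubar (j - 1) :: 'k Astar)" if "m \<in> ks f" "j \<in> snd m" for m j
    proof -
      have "j \<ge> i + 1" using A that by (auto simp: AmodE_def)
      then show ?thesis by (auto simp: taubar_def allk_def sp_odd_def)
    qed
    show "finite (snd m)" if "m \<in> ks f" for m
      using A that by (auto simp: AmodE_def)
  qed
  then show ?thesis using i by (auto simp: allk_def AmodE_def)
qed

theorem main_gen:
  fixes f :: "'k::comm_ring_1 Astar"
  assumes TWO: "\<forall>c::'k. c + c = 0 \<longrightarrow> c = 0" and A: "AmodE i f"
  shows "coact p i (phi i f) = id_tensor (phi i) (coact p i f)"
proof -
  have FIN: "\<And>m. m \<in> ks f \<Longrightarrow> finite (snd m)" using A by (auto simp: AmodE_def)
  have fpsiE: "finsp (psiE p k :: 'k Atens)" for k by (rule parsp_finsp[OF psiE_par])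
  have fpsiO: "finsp (psiO p k :: 'k Atens)" for k by (rule parsp_finsp[OF psiO_par])
  have fprE: "finsp (prE x :: 'k Atens)" for x by (rule parsp_finsp[OF prE_par])
  have fprO: "finsp (prO i x :: 'k Atens)" for x by (rule parsp_finsp[OF prO_par])
  have 1: "hom_ext (psiE p) (psiO p) (hom_ext (\<lambda>k. zeta (k - 1)) (\<lambda>j. taubar (j - 1)) f)
    = hom_ext (\<lambda>k. hom_ext (psiE p) (psiO p) (zeta (k - 1))) (\<lambda>j. hom_ext (psiE p) (psiO p) (taubar (j - 1))) f"
    by (rule hom_ext_comp[OF psiE_par psiO_par psiSQ[OF TWO]]) simp_all
  have 2: "hom_ext prE (prO i) (hom_ext (\<lambda>k. hom_ext (psiE p) (psiO p) (zeta (k - 1))) (\<lambda>j. hom_ext (psiE p) (psiO p) (taubar (j - 1))) f)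
    = hom_ext (\<lambda>k. hom_ext prE (prO i) (hom_ext (psiE p) (psiO p) (zeta (k - 1)))) (\<lambda>j. hom_ext prE (prO i) (hom_ext (psiE p) (psiO p) (taubar (j - 1)))) f"
    by (rule hom_ext_comp[OF prE_par prO_par prSQ[OF TWO]]) (simp_all add: finsp_hom_ext fpsiE fpsiO)
  have 3: "hom_ext prE (prO i) (hom_ext (psiE p) (psiO p) f)
    = hom_ext (\<lambda>k. hom_ext prE (prO i) (psiE p k)) (\<lambda>j. hom_ext prE (prO i) (psiO p j)) f"
    by (rule hom_ext_comp[OF prE_par prO_par prSQ[OF TWO]]) (simp_all add: fpsiE fpsiO)
  have 4: "hom_ext (idE i) (idO i) (hom_ext (\<lambda>k. hom_ext prE (prO i) (psiE p k)) (\<lambda>j. hom_ext prE (prO i) (psiO p j)) f)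
    = hom_ext (\<lambda>k. hom_ext (idE i) (idO i) (hom_ext prE (prO i) (psiE p k))) (\<lambda>j. hom_ext (idE i) (idO i) (hom_ext prE (prO i) (psiO p j))) f"
    by (rule hom_ext_comp[OF idE_par idO_par idSQ[OF TWO]]) (simp_all add: finsp_hom_ext fprE fprO)
  have 5: "hom_ext (\<lambda>k. hom_ext prE (prO i) (hom_ext (psiE p) (psiO p) (zeta (k - 1)))) (\<lambda>j. hom_ext prE (prO i) (hom_ext (psiE p) (psiO p) (taubar (j - 1)))) f
     = hom_ext (\<lambda>k. hom_ext (idE i) (idO i) (hom_ext prE (prO i) (psiE p k))) (\<lambda>j. hom_ext (idE i) (idO i) (hom_ext prE (prO i) (psiO p j))) f"
  proof (rule hom_ext_cong)
    fix m k assume mk: "m \<in> ks f" "k \<in> ks (fst m)"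
    have "0 \<notin> ks (fst m)" using A mk(1) unfolding AmodE_def by blast
    then have k: "k \<noteq> 0" using mk(2) by metis
    show "hom_ext prE (prO i) (hom_ext (psiE p) (psiO p) (zeta (k - 1) :: 'k Astar))
        = hom_ext (idE i) (idO i) (hom_ext prE (prO i) (psiE p k))"
    proof -
      have a: "hom_ext prE (prO i) (hom_ext (psiE p) (psiO p) (zeta (k - 1))) = (zetaR (k - 1) :: 'k Atens)"
        by (rule projE_psi_zeta[OF TWO])
      have b: "hom_ext (idE i) (idO i) (hom_ext prE (prO i) (psiE p k)) = (zetaR (k - 1) :: 'k Atens)"
        by (simp only: projE_psiE[OF TWO] idt_zetaR)
      show ?thesis by (rule trans[OF a b[symmetric]])
    qed
  next
    fix m j assume "m \<in> ks f" "j \<in> snd m"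
    then have j: "j \<ge> i + 1" using A by (auto simp: AmodE_def)
    show "hom_ext prE (prO i) (hom_ext (psiE p) (psiO p) (taubar (j - 1) :: 'k Astar))
        = hom_ext (idE i) (idO i) (hom_ext prE (prO i) (psiO p j))"
      by (rule odd_gen_eq[OF TWO j])
  next
    fix m assume "m \<in> ks f" then show "finite (snd m)" by (rule FIN)
  qed
  have P: "phi i f = hom_ext (\<lambda>k. zeta (k - 1)) (\<lambda>j. taubar (j - 1)) f"
    by (simp add: phi_def)
  show ?thesis
    unfolding coact_def projE_alt psi_alt idt_alt P 1 2 3 4 5 ..
qed

theorem mainTheorem12:
  fixes p i :: nat and f :: "'k::{field,finite} Astar"
  assumes "prime p" and "odd p" and "card (UNIV :: 'k set) = p"
    and "i \<ge> 1" and "AmodE i f"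
  shows "AmodE (i - 1) (phi i f) \<and> coact p i (phi i f) = id_tensor (phi i) (coact p i f)"
proof
  show "AmodE (i - 1) (phi i f)" by (rule AmodE_phi[OF assms(5,4)])
  have TWO: "\<forall>c::'k. c + c = 0 \<longrightarrow> c = 0"
    by (rule two_torsion) (use assms(2,3) in simp)
  show "coact p i (phi i f) = id_tensor (phi i) (coact p i f)"
    by (rule main_gen[OF TWO assms(5)])
qed

end
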